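(* For every family $(\alpha_k)$ as below, $\mathrm{3SAT}^{\mathrm C}$ is $\mathrm{P}^*_{\mathrm{lsis}}$-complete.
   Context: $\mathbb B=\{T,F\}$. Let $v_1,v_2,\dots$ be propositional variables. For $k\in\mathbb N$ let $d(k)=\binom{2k}{1}+\binom{2k}{2}+\binom{2k}{3}$, and let $L_k$ be the set of sets $L$ of literals from $\{v_1,\neg v_1,\dots,v_k,\neg v_k\}$ with $1\le |L|\le 3$. Let $(\alpha_k)_{k\in\mathbb N}$ be bijections $\alpha_k:[1,d(k)]\to L_k$ with (i) $\alpha_{i+1}(j)=\alpha_i(j)$ for all $i$ and $j\in[1,d(i)]$, and (ii) the map $\alpha(i)=\alpha_k(i)$ (least $k$ with $i\le d(k)$) polynomial-time computable. For $n\in\mathbb N$ let $k$ be such that $d(k)\le n<d(k+1)$ and let $\mathrm{3SAT}^{\mathrm C}_n(b_1,\dots,b_n)=T$ iff $\bigwedge_{i\in[1,d(k)],\,b_i=T}\bigvee\alpha_k(i)$ is satisfiable; $\mathrm{3SAT}^{\mathrm C}=(\mathrm{3SAT}^{\mathrm C}_n)_n$. A primitive instruction is one of: a plain basic instruction $a$, a positive test instruction $+a$, a negative test instruction $-a$, a forward jump instruction $\#l$ ($l\in\mathbb N$), or the termination instruction $!$. An instruction sequence is a finite nonempty sequence $X=u_1;\dots;u_k$ of primitive instructions; $|X|=k$. Basic instructions are either $f.m$ with focus $f\in\{\mathrm{in}{:}i,\mathrm{aux}{:}i: i\ge1\}\cup\{\mathrm{out}\}$ (Boolean registers) and method $m\in\{\mathrm{set}{:}T,\mathrm{set}{:}F,\mathrm{get}\}$,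 or $\mathrm{split}(\mathrm{par}{:}i)$, $\mathrm{reply}(\mathrm{par}{:}i)$ for Boolean parameters $\mathrm{par}{:}i$. $f.\mathrm{set}{:}b$ sets register $f$ to $b$ and yields $b$; $f.\mathrm{get}$ yields the register's content. Non-splitting execution: a counter starts at 1; if it exceeds $k$, execution deadlocks. At position $i$: $!$ terminates; $\#l$ deadlocks if $l=0$, else the counter becomes $i+l$; for $a,+a,-a$ the instruction $a$ yields reply $r$ and the counter becomes $i+1$ for $a$; for $+a$: $i+1$ if $r=T$, $i+2$ if $r=F$; for $-a$: $i+1$ if $r=F$, $i+2$ if $r=T$. $\mathrm{IS}_{br}$: sequences all of whose basic instructions lie in $\{f.\mathrm{get}: f=\mathrm{in}{:}i\text{ or }\mathrm{aux}{:}i\}\cup\{f.\mathrm{set}{:}b: f=\mathrm{aux}{:}i\text{ or }\mathrm{out}\}$. $X\in\mathrm{IS}_{br}$ computes $f:\mathbb B^n\to\mathbb B$ if for every $b\in\mathbb B^n$, executing $X$ with $\mathrm{in}{:}j$ initialised to $b_j$, all $\mathrm{aux}{:}i$ and $\mathrm{out}$ initialised to $F$, terminates without deadlock, never executes a basic instruction with focus $\mathrm{in}{:}j$, $j>n$, and ends with $\mathrm{out}$ containing $f(b)$. $\mathrm{SIS}_{br}$: sequences all of whose basic instructions lie in $\{\mathrm{in}{:}i.\mathrm{get}\}\cup\{\mathrm{out}.\mathrm{set}{:}T\}\cup\{\mathrm{split}(\mathrm{par}{:}i),\mathrm{reply}(\mathrm{par}{:}i)\}$. Splitting execution of $X\in\mathrm{SIS}_{br}$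 on $b\in\mathbb B^n$ is a finite tree of branches, each with a counter (initially 1) and a partial parameter assignment $\sigma$ (initially empty); a branch deadlocks under the non-splitting deadlock conditions, or if it executes $\mathrm{in}{:}j.\mathrm{get}$ with $j>n$, $\mathrm{reply}(p)$ with $\sigma(p)$ undefined, or $\mathrm{split}(p)$ with $\sigma(p)$ defined; otherwise instructions act as in non-splitting execution with replies $\mathrm{in}{:}j.\mathrm{get}\mapsto b_j$, $\mathrm{out}.\mathrm{set}{:}T\mapsto T$, $\mathrm{reply}(p)\mapsto\sigma(p)$, and $\mathrm{split}(p)$ replacing the branch by two branches, one with reply $T$ and $\sigma\cup\{p\mapsto T\}$, one with reply $F$ and $\sigma\cup\{p\mapsto F\}$. A branch reaching $!$ terminates successfully. $X$ splitting computes $f$ if for every $b$ every branch terminates successfully and $f(b)=T$ iff some branch executes $\mathrm{out}.\mathrm{set}{:}T$. $\mathrm{P}^*_{\mathrm{lsis}}$: Boolean function families $(f_n)$, $f_n:\mathbb B^n\to\mathbb B$, for which there is a polynomial $h$ such that for every $n$ some $X\in\mathrm{SIS}_{br}$ splitting computes $f_n$ with $|X|\le h(n)$. For $f:\mathbb B^n\to\mathbb B$, $g:\mathbb B^m\to\mathbb B$, $f\le_l g$ iff there are $h_1,\dots,h_m:\mathbb B^n\to\mathbb B$ computed by some $X_1,\dots,X_m\in\mathrm{IS}_{br}$ with $|X_i|\le l$ such that $f(b)=g(h_1(b),\dots,h_m(b))$ for all $b$. $(f_n)\le_{\mathrm{pl}}(g_n)$ iff there is a polynomial $q$ such that for every $n$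 there are $l,m\le q(n)$ with $f_n\le_l g_m$. $(f_n)$ is $\mathrm{P}^*_{\mathrm{lsis}}$-complete iff $(f_n)\in\mathrm{P}^*_{\mathrm{lsis}}$ and $(g_n)\le_{\mathrm{pl}}(f_n)$ for every $(g_n)\in\mathrm{P}^*_{\mathrm{lsis}}$. *)

theory Defs
  imports Main "HOL-Computational_Algebra.Polynomial"
begin

datatype lit = Pos nat | Neg nat   (* Pos i = v_i,  Neg i = not v_i  (i \<ge> 1) *)

definition lits :: "nat \<Rightarrow> lit set" where
  "lits k = Pos ` {1..k} \<union> Neg ` {1..k}"

definition Lk :: "nat \<Rightarrow> lit set set" where
  "Lk k = {L. L \<subseteq> lits k \<and> 1 \<le> card L \<and> card L \<le> 3}"

definition d :: "nat \<Rightarrow> nat" where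
  "d k = (2*k choose 1) + (2*k choose 2) + (2*k choose 3)"

fun lit_val :: "(nat \<Rightarrow> bool) \<Rightarrow> lit \<Rightarrow> bool" where
  "lit_val \<sigma> (Pos i) = \<sigma> i"
| "lit_val \<sigma> (Neg i) = (\<not> \<sigma> i)"

definition admissible_alpha :: "(nat \<Rightarrow> nat \<Rightarrow> lit set) \<Rightarrow> bool" where
  "admissible_alpha alpha \<longleftrightarrow>
     (\<forall>k. bij_betw (alpha k) {1..d k} (Lk k)) \<and>
     (\<forall>i j. j \<in> {1..d i} \<longrightarrow> alpha (Suc i) j = alpha i j)"

definition kof :: "nat \<Rightarrow> nat" where
  "kof n = (THE k. d k \<le> n \<and> n < d (Suc k))"

text \<open>Boolean function families: f n is f_n, applied to inputs b = [b_1,...,b_n]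
  (lists of length n; values on other lengths are irrelevant).\<close>
type_synonym bfam = "nat \<Rightarrow> bool list \<Rightarrow> bool"

definition sat3C :: "(nat \<Rightarrow> nat \<Rightarrow> lit set) \<Rightarrow> bfam" where
  "sat3C alpha n b =
     (let k = kof n in
      \<exists>\<sigma> :: nat \<Rightarrow> bool. \<forall>i \<in> {1..d k}. b ! (i - 1) \<longrightarrow> (\<exists>l \<in> alpha k i. lit_val \<sigma> l))"

datatype focus = In nat | Aux nat | Out
datatype meth = Set bool | Get
datatype basic = Reg focus meth | Split nat | Reply nat
datatype prim = Plain basic | PosT basic | NegT basic | Jump nat | Term

type_synonym iseq = "prim list"

fun basic_of :: "prim \<Rightarrow> basic option" where
  "basic_of (Plain a) = Some a"
| "basic_of (PosT a) = Some a"
| "basic_of (NegT a) = Some a"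
| "basic_of _ = None"

fun nxt :: "prim \<Rightarrow> bool \<Rightarrow> nat \<Rightarrow> nat" where
  "nxt (PosT a) r i = (if r then i + 1 else i + 2)"
| "nxt (NegT a) r i = (if r then i + 2 else i + 1)"
| "nxt _ r i = i + 1"

definition basics :: "iseq \<Rightarrow> basic set" where
  "basics X = {a. \<exists>u \<in> set X. basic_of u = Some a}"

definition IS_br :: "iseq set" where
  "IS_br = {X. X \<noteq> [] \<and> basics X \<subseteq>
      {Reg (In i) Get | i. i \<ge> 1} \<union> {Reg (Aux i) Get | i. i \<ge> 1}
      \<union> {Reg (Aux i) (Set b) | i b. i \<ge> 1} \<union> {Reg Out (Set b) | b. True}}"

definition SIS_br :: "iseq set" where
  "SIS_br = {X. X \<noteq> [] \<and> basics X \<subseteq>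
      {Reg (In i) Get | i. i \<ge> 1} \<union> {Reg Out (Set True)}
      \<union> {Split i | i. i \<ge> 1} \<union> {Reply i | i. i \<ge> 1}}"

text \<open>Effect of a register instruction on the register state (n = input length).
  None = deadlock (in particular accessing in:j with j > n).\<close>
fun reg_eff :: "nat \<Rightarrow> basic \<Rightarrow> (focus \<Rightarrow> bool) \<Rightarrow> (bool \<times> (focus \<Rightarrow> bool)) option" where
  "reg_eff n (Reg f Get) s =
     (case f of In j \<Rightarrow> if 1 \<le> j \<and> j \<le> n then Some (s f, s) else None
              | _ \<Rightarrow> Some (s f, s))"
| "reg_eff n (Reg f (Set b)) s =
     (case f of In j \<Rightarrow> if 1 \<le> j \<and> j \<le> n then Some (b, s(f := b)) else None
              | _ \<Rightarrow> Some (b, s(f := b)))"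
| "reg_eff n _ s = None"

text \<open>nexec X n i s s': execution of X from counter i with registers s terminates
  successfully (reaches !) with final registers s'.  Absence of a derivation =
  deadlock.\<close>
inductive nexec :: "iseq \<Rightarrow> nat \<Rightarrow> nat \<Rightarrow> (focus \<Rightarrow> bool) \<Rightarrow> (focus \<Rightarrow> bool) \<Rightarrow> bool"
  for X n where
  nterm: "\<lbrakk>1 \<le> i; i \<le> length X; X ! (i - 1) = Term\<rbrakk> \<Longrightarrow> nexec X n i s s"
| njump: "\<lbrakk>1 \<le> i; i \<le> length X; X ! (i - 1) = Jump l; l \<noteq> 0;
          nexec X n (i + l) s s'\<rbrakk> \<Longrightarrow> nexec X n i s s'"
| nbasic: "\<lbrakk>1 \<le> i; i \<le> length X; basic_of (X ! (i - 1)) = Some a;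
           reg_eff n a s = Some (r, s1); nexec X n (nxt (X ! (i - 1)) r i) s1 s'\<rbrakk>
           \<Longrightarrow> nexec X n i s s'"

definition init_regs :: "bool list \<Rightarrow> focus \<Rightarrow> bool" where
  "init_regs b f = (case f of In j \<Rightarrow> (if 1 \<le> j \<and> j \<le> length b then b ! (j - 1) else False)
                              | _ \<Rightarrow> False)"

definition computes :: "iseq \<Rightarrow> nat \<Rightarrow> (bool list \<Rightarrow> bool) \<Rightarrow> bool" where
  "computes X n f \<longleftrightarrow> X \<in> IS_br \<and>
     (\<forall>b. length b = n \<longrightarrow> (\<exists>s'. nexec X n 1 (init_regs b) s' \<and> s' Out = f b))"

text \<open>Reply of a non-split basic instruction in a branch with parameter assignment
  sigma, together with a flag telling whether it is out.set:T.  None = deadlock.\<close>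
fun sreply :: "bool list \<Rightarrow> (nat \<Rightarrow> bool option) \<Rightarrow> basic \<Rightarrow> (bool \<times> bool) option" where
  "sreply b \<sigma> (Reg (In j) Get) =
     (if 1 \<le> j \<and> j \<le> length b then Some (b ! (j - 1), False) else None)"
| "sreply b \<sigma> (Reg Out (Set True)) = Some (True, True)"
| "sreply b \<sigma> (Reply p) = map_option (\<lambda>r. (r, False)) (\<sigma> p)"
| "sreply b \<sigma> _ = None"

text \<open>sexec X b i sigma t: every branch of the splitting execution of X on input b
  starting from a branch with counter i and parameter assignment sigma terminates
  successfully, and t holds iff some branch executes out.set:T.\<close>
inductive sexec :: "iseq \<Rightarrow> bool list \<Rightarrow> nat \<Rightarrow> (nat \<Rightarrow> bool option) \<Rightarrow> bool \<Rightarrow> bool"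
  for X b where
  sterm: "\<lbrakk>1 \<le> i; i \<le> length X; X ! (i - 1) = Term\<rbrakk> \<Longrightarrow> sexec X b i \<sigma> False"
| sjump: "\<lbrakk>1 \<le> i; i \<le> length X; X ! (i - 1) = Jump l; l \<noteq> 0;
          sexec X b (i + l) \<sigma> t\<rbrakk> \<Longrightarrow> sexec X b i \<sigma> t"
| sbasic: "\<lbrakk>1 \<le> i; i \<le> length X; basic_of (X ! (i - 1)) = Some a;
           sreply b \<sigma> a = Some (r, w); sexec X b (nxt (X ! (i - 1)) r i) \<sigma> t\<rbrakk>
           \<Longrightarrow> sexec X b i \<sigma> (w \<or> t)"
| ssplit: "\<lbrakk>1 \<le> i; i \<le> length X; basic_of (X ! (i - 1)) = Some (Split p); \<sigma> p = None;
           sexec X b (nxt (X ! (i - 1)) True i) (\<sigma>(p \<mapsto> True)) t1;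
           sexec X b (nxt (X ! (i - 1)) False i) (\<sigma>(p \<mapsto> False)) t2\<rbrakk>
           \<Longrightarrow> sexec X b i \<sigma> (t1 \<or> t2)"

definition split_computes :: "iseq \<Rightarrow> nat \<Rightarrow> (bool list \<Rightarrow> bool) \<Rightarrow> bool" where
  "split_computes X n f \<longleftrightarrow> X \<in> SIS_br \<and>
     (\<forall>b. length b = n \<longrightarrow> (\<exists>t. sexec X b 1 Map.empty t \<and> (f b \<longleftrightarrow> t)))"

definition P_lsis :: "bfam set" where
  "P_lsis = {F. \<exists>h :: nat poly. \<forall>n. \<exists>X. split_computes X n (F n) \<and> length X \<le> poly h n}"

text \<open>red_l l n f m g:  f <=_l g  for f : B^n -> B, g : B^m -> B
  (h i is h_(i+1)).\<close>
definition red_l :: "nat \<Rightarrow> nat \<Rightarrow> (bool list \<Rightarrow> bool) \<Rightarrow> nat \<Rightarrow> (bool list \<Rightarrow> bool) \<Rightarrow> bool" where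
  "red_l l n f m g \<longleftrightarrow>
     (\<exists>h :: nat \<Rightarrow> bool list \<Rightarrow> bool.
        (\<forall>i < m. \<exists>X. computes X n (h i) \<and> length X \<le> l) \<and>
        (\<forall>b. length b = n \<longrightarrow> f b = g (map (\<lambda>i. h i b) [0..<m])))"

definition red_pl :: "bfam \<Rightarrow> bfam \<Rightarrow> bool" where
  "red_pl F G \<longleftrightarrow> (\<exists>q :: nat poly. \<forall>n. \<exists>l m. l \<le> poly q n \<and> m \<le> poly q n \<and> red_l l n (F n) m (G m))"

definition P_lsis_complete :: "bfam \<Rightarrow> bool" where
  "P_lsis_complete F \<longleftrightarrow> F \<in> P_lsis \<and> (\<forall>G \<in> P_lsis. red_pl G F)"

end

theory Submission
  imports Defs
begin


lemma choose_le_pow: "(n::nat) choose r \<le> n ^ r"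
  by (cases "r \<le> n") (auto intro: binomial_le_pow simp: binomial_eq_0)

lemma d_le: "d k \<le> (2*k+1)^3"
proof -
  have "d k \<le> (2*k)^1 + (2*k)^2 + (2*k)^3"
    unfolding d_def using choose_le_pow[of "2*k" 1] choose_le_pow[of "2*k" 2] choose_le_pow[of "2*k" 3]
    by linarith
  also have "\<dots> \<le> (2*k+1)^3"
    by (simp add: power3_eq_cube power2_eq_square algebra_simps)
  finally show ?thesis .
qed

lemma d_ge: "k \<le> d k"
  unfolding d_def by simp

lemma d_strict: "d k < d (Suc k)"
proof -
  have "(2*k choose 2) \<le> (2*Suc k choose 2)" "(2*k choose 3) \<le> (2*Suc k choose 3)"
    by (auto intro!: binomial_right_mono)
  then show ?thesis unfolding d_def by simp
qed

lemma d_smono: "strict_mono d"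
  using d_strict by (simp add: strict_mono_Suc_iff)

lemma d_uniq: "d a \<le> n \<Longrightarrow> n < d (Suc a) \<Longrightarrow> d b \<le> n \<Longrightarrow> n < d (Suc b) \<Longrightarrow> a = b"
proof (rule ccontr)
  assume h: "d a \<le> n" "n < d (Suc a)" "d b \<le> n" "n < d (Suc b)" "a \<noteq> b"
  show False
  proof (cases "a < b")
    case True
    then have "d (Suc a) \<le> d b" using d_smono by (simp add: strict_mono_less_eq)
    with h show False by simp
  next
    case False
    then have "b < a" using h by simp
    then have "d (Suc b) \<le> d a" using d_smono by (simp add: strict_mono_less_eq)
    with h show False by simp
  qed
qed

lemma d_ex: "\<exists>k. d k \<le> n \<and> n < d (Suc k)"
proof (induction n)
  case 0
  then show ?case by (rule exI[of _ 0]) (simp add: d_def)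
next
  case (Suc n)
  then obtain k where k: "d k \<le> n" "n < d (Suc k)" by blast
  show ?case
  proof (cases "Suc n < d (Suc k)")
    case True
    then show ?thesis using k by (intro exI[of _ k]) simp
  next
    case False
    then have "d (Suc k) = Suc n" using k by simp
    then show ?thesis using d_strict[of "Suc k"] by (intro exI[of _ "Suc k"]) simp
  qed
qed

lemma kof_prop: "d (kof n) \<le> n \<and> n < d (Suc (kof n))"
  unfolding kof_def
  using d_ex[of n] d_uniq[of _ n] by (metis (mono_tags, lifting) theI)

lemma kof_d: "kof (d k) = k"
  using kof_prop[of "d k"] d_uniq[of k "d k" "kof (d k)"] d_strict[of k] by simp



section \<open>Membership\<close>

fun litv :: "(nat \<Rightarrow> bool option) \<Rightarrow> lit \<Rightarrow> bool" where
  "litv \<sigma> (Pos v) = (\<sigma> v = Some True)"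
| "litv \<sigma> (Neg v) = (\<sigma> v = Some False)"

fun var :: "lit \<Rightarrow> nat" where
  "var (Pos v) = v" | "var (Neg v) = v"

fun test :: "lit \<Rightarrow> prim" where
  "test (Pos v) = PosT (Reply v)" | "test (Neg v) = NegT (Reply v)"

fun chk :: "lit list \<Rightarrow> prim list" where
  "chk [] = [Term]"
| "chk (l # ls) = [test l, Jump (2 * length ls + 2)] @ chk ls"

definition blk :: "nat \<Rightarrow> lit list \<Rightarrow> prim list" where
  "blk c ls = [NegT (Reg (In c) Get), Jump (2 * length ls + 2)] @ chk ls"

fun code :: "(nat \<times> lit list) list \<Rightarrow> prim list" where
  "code [] = [Plain (Reg Out (Set True)), Term]"
| "code ((c, ls) # r) = blk c ls @ code r"

lemma length_chk[simp]: "length (chk ls) = 2 * length ls + 1"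
  by (induction ls) auto

lemma length_blk[simp]: "length (blk c ls) = 2 * length ls + 3"
  by (simp add: blk_def)

lemma sexec_eq: "sexec X b i \<sigma> t \<Longrightarrow> t = t' \<Longrightarrow> sexec X b i \<sigma> t'"
  by simp

lemma sexec_valid: "sexec X b i \<sigma> t \<Longrightarrow> 1 \<le> i \<and> i \<le> length X"
  by (induction rule: sexec.induct) auto

lemma test_step:
  assumes "1 \<le> i" "i \<le> length X" "X ! (i - 1) = test l" "\<sigma> (var l) \<noteq> None"
  shows "litv \<sigma> l \<Longrightarrow> sexec X b (i + 1) \<sigma> t \<Longrightarrow> sexec X b i \<sigma> t"
    and "\<not> litv \<sigma> l \<Longrightarrow> sexec X b (i + 2) \<sigma> t \<Longrightarrow> sexec X b i \<sigma> t"
proof -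
  obtain r where r: "\<sigma> (var l) = Some r" using assms(4) by auto
  have sr: "sreply b \<sigma> (Reply (var l)) = Some (r, False)" using r by simp
  have bo: "basic_of (X ! (i - 1)) = Some (Reply (var l))" using assms(3) by (cases l) auto
  show "litv \<sigma> l \<Longrightarrow> sexec X b (i + 1) \<sigma> t \<Longrightarrow> sexec X b i \<sigma> t"
  proof -
    assume h: "litv \<sigma> l" "sexec X b (i + 1) \<sigma> t"
    have "nxt (X ! (i - 1)) r i = i + 1" using assms(3) h(1) r by (cases l) auto
    then show ?thesis using sexec.sbasic[OF assms(1,2) bo sr, of t] h(2) by simp
  qed
  show "\<not> litv \<sigma> l \<Longrightarrow> sexec X b (i + 2) \<sigma> t \<Longrightarrow> sexec X b i \<sigma> t"
  proof -
    assume h: "\<not> litv \<sigma> l" "sexec X b (i + 2) \<sigma> t"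
    have "nxt (X ! (i - 1)) r i = i + 2" using assms(3) h(1) r by (cases l) auto
    then show ?thesis using sexec.sbasic[OF assms(1,2) bo sr, of t] h(2) by simp
  qed
qed

lemma chk_sem:
  assumes "X = pre @ chk ls @ rest" "\<forall>l\<in>set ls. \<sigma> (var l) \<noteq> None"
    "sexec X b (length pre + length (chk ls) + 1) \<sigma> t"
  shows "sexec X b (length pre + 1) \<sigma> (if (\<exists>l\<in>set ls. litv \<sigma> l) then t else False)"
  using assms
proof (induction ls arbitrary: pre)
  case Nil
  then show ?case by (auto intro!: sexec.sterm simp: nth_append)
next
  case (Cons l ls)
  let ?i = "length pre + 1"
  have X: "X = (pre @ [test l, Jump (2 * length ls + 2)]) @ chk ls @ rest"
    using Cons.prems by simp
  have at1: "X ! (?i - 1) = test l" "X ! (?i + 1 - 1) = Jump (2 * length ls + 2)"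
    using X by (auto simp: nth_append)
  have len: "?i + 1 \<le> length X" using X by simp
  show ?case
  proof (cases "litv \<sigma> l")
    case True
    have "sexec X b (?i + 1 + (2 * length ls + 2)) \<sigma> t"
      using Cons.prems(3) by (simp add: algebra_simps)
    then have "sexec X b (?i + 1) \<sigma> t"
      by (intro sexec.sjump[OF _ len at1(2)]) auto
    then have "sexec X b ?i \<sigma> t"
      using test_step(1)[of ?i X l \<sigma> b t] at1 len Cons.prems(2) True by auto
    then show ?thesis using True by simp
  next
    case False
    have "sexec X b (length (pre @ [test l, Jump (2 * length ls + 2)]) + 1) \<sigma>
            (if (\<exists>l\<in>set ls. litv \<sigma> l) then t else False)"
      using Cons.IH[OF X] Cons.prems(2,3) by (simp add: algebra_simps)
    then have "sexec X b (?i + 2) \<sigma> (if (\<exists>l\<in>set ls. litv \<sigma> l) then t else False)"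
      by (simp add: algebra_simps)
    then have "sexec X b ?i \<sigma> (if (\<exists>l\<in>set ls. litv \<sigma> l) then t else False)"
      using test_step(2)[of ?i X l \<sigma>] at1 len Cons.prems(2) False by auto
    then show ?thesis using False by simp
  qed
qed

lemma blk_sem:
  assumes "X = pre @ blk c ls @ rest" "1 \<le> c" "c \<le> length b" "\<forall>l\<in>set ls. \<sigma> (var l) \<noteq> None"
    "sexec X b (length pre + length (blk c ls) + 1) \<sigma> t"
  shows "sexec X b (length pre + 1) \<sigma> (if b ! (c - 1) \<longrightarrow> (\<exists>l\<in>set ls. litv \<sigma> l) then t else False)"
proof -
  let ?i = "length pre + 1"
  have X: "X = (pre @ [NegT (Reg (In c) Get), Jump (2 * length ls + 2)]) @ chk ls @ rest"
    using assms(1) by (simp add: blk_def)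
  have at1: "X ! (?i - 1) = NegT (Reg (In c) Get)" "X ! (?i + 1 - 1) = Jump (2 * length ls + 2)"
    using X by (auto simp: nth_append)
  have len: "?i + 1 \<le> length X" using X by simp
  have sr: "sreply b \<sigma> (Reg (In c) Get) = Some (b ! (c - 1), False)" using assms(2,3) by simp
  have bo: "basic_of (X ! (?i - 1)) = Some (Reg (In c) Get)" using at1 by simp
  show ?thesis
  proof (cases "b ! (c - 1)")
    case False
    have e: "?i + 1 + (2 * length ls + 2) = length pre + length (blk c ls) + 1" by simp
    have "sexec X b (?i + 1 + (2 * length ls + 2)) \<sigma> t"
      using assms(5) e by metis
    then have "sexec X b (?i + 1) \<sigma> t"
      by (intro sexec.sjump[OF _ len at1(2)]) auto
    then have "sexec X b ?i \<sigma> (False \<or> t)"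
      using sexec.sbasic[OF _ _ bo sr, of t] len at1 False by auto
    then show ?thesis using False by simp
  next
    case True
    have "sexec X b (length (pre @ [NegT (Reg (In c) Get), Jump (2 * length ls + 2)]) + 1) \<sigma>
            (if (\<exists>l\<in>set ls. litv \<sigma> l) then t else False)"
    proof (rule chk_sem[OF X assms(4)])
      have e: "length (pre @ [NegT (Reg (In c) Get), Jump (2 * length ls + 2)]) + length (chk ls) + 1
          = length pre + length (blk c ls) + 1" by simp
      show "sexec X b (length (pre @ [NegT (Reg (In c) Get), Jump (2 * length ls + 2)]) + length (chk ls) + 1) \<sigma> t"
        using assms(5) e by metis
    qed
    then have "sexec X b (?i + 2) \<sigma> (if (\<exists>l\<in>set ls. litv \<sigma> l) then t else False)"
      by (simp add: algebra_simps)
    then have "sexec X b ?i \<sigma> (False \<or> (if (\<exists>l\<in>set ls. litv \<sigma> l) then t else False))"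
      using sexec.sbasic[OF _ _ bo sr] len at1 True by auto
    then show ?thesis using True by simp
  qed
qed

lemma code_sem:
  assumes "X = pre @ code items"
    "\<forall>(c, ls)\<in>set items. 1 \<le> c \<and> c \<le> length b \<and> (\<forall>l\<in>set ls. \<sigma> (var l) \<noteq> None)"
  shows "sexec X b (length pre + 1) \<sigma> (\<forall>(c, ls)\<in>set items. b ! (c - 1) \<longrightarrow> (\<exists>l\<in>set ls. litv \<sigma> l))"
  using assms
proof (induction items arbitrary: pre)
  case Nil
  let ?i = "length pre + 1"
  have at: "X ! (?i - 1) = Plain (Reg Out (Set True))" "X ! (?i + 1 - 1) = Term"
    using Nil by (auto simp: nth_append)
  have len: "?i + 1 \<le> length X" using Nil by simp
  have "sexec X b (?i + 1) \<sigma> False" using at len by (intro sexec.sterm) auto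
  then have "sexec X b ?i \<sigma> (True \<or> False)"
    using sexec.sbasic[of ?i X "Reg Out (Set True)" b \<sigma> True True False] at len by auto
  then show ?case by simp
next
  case (Cons it items)
  obtain c ls where it: "it = (c, ls)" by fastforce
  have X: "X = (pre @ blk c ls) @ code items" using Cons.prems it by simp
  have "sexec X b (length (pre @ blk c ls) + 1) \<sigma>
     (\<forall>(c, ls)\<in>set items. b ! (c - 1) \<longrightarrow> (\<exists>l\<in>set ls. litv \<sigma> l))"
    using Cons.IH[OF X] Cons.prems(2) by auto
  then have "sexec X b (length pre + 1) \<sigma> (if b ! (c - 1) \<longrightarrow> (\<exists>l\<in>set ls. litv \<sigma> l) then
     (\<forall>(c, ls)\<in>set items. b ! (c - 1) \<longrightarrow> (\<exists>l\<in>set ls. litv \<sigma> l)) else False)"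
    using blk_sem[of X pre c ls "code items" b \<sigma>] X Cons.prems(2) it by (auto simp: algebra_simps)
  then show ?case using it by (elim sexec_eq) (auto split: if_splits)
qed



definition splits :: "nat \<Rightarrow> prim list" where
  "splits k = map (\<lambda>p. Plain (Split p)) [1..<Suc k]"

lemma length_splits[simp]: "length (splits k) = k"
  by (simp add: splits_def)

definition EE :: "nat \<Rightarrow> ((nat \<Rightarrow> bool option) \<Rightarrow> bool) \<Rightarrow> (nat \<Rightarrow> bool option) \<Rightarrow> bool" where
  "EE k G \<sigma> = (\<exists>\<sigma>'. \<sigma> \<subseteq>\<^sub>m \<sigma>' \<and> dom \<sigma>' = {1..k} \<and> G \<sigma>')"

lemma EE_full: "dom \<sigma> = {1..k} \<Longrightarrow> EE k G \<sigma> = G \<sigma>"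
proof -
  assume h: "dom \<sigma> = {1..k}"
  have "\<sigma>' = \<sigma>" if "\<sigma> \<subseteq>\<^sub>m \<sigma>'" "dom \<sigma>' = {1..k}" for \<sigma>'
  proof
    fix x show "\<sigma>' x = \<sigma> x"
    proof (cases "x \<in> dom \<sigma>")
      case True then show ?thesis using that(1) by (auto simp: map_le_def)
    next
      case False then show ?thesis using h that(2) by (metis domIff)
    qed
  qed
  then show ?thesis unfolding EE_def using h by (auto simp: map_le_def)
qed

lemma EE_split:
  assumes "\<sigma> p = None" "p \<in> {1..k}"
  shows "EE k G \<sigma> = (EE k G (\<sigma>(p \<mapsto> True)) \<or> EE k G (\<sigma>(p \<mapsto> False)))"
proof
  assume "EE k G \<sigma>"
  then obtain \<sigma>' where s: "\<sigma> \<subseteq>\<^sub>m \<sigma>'" "dom \<sigma>' = {1..k}" "G \<sigma>'" unfolding EE_def by blast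
  have "p \<in> dom \<sigma>'" using s(2) assms(2) by simp
  then obtain r where r: "\<sigma>' p = Some r" by blast
  have "\<sigma>(p \<mapsto> r) \<subseteq>\<^sub>m \<sigma>'" using s(1) r by (auto simp: map_le_def)
  then have "EE k G (\<sigma>(p \<mapsto> r))" using s unfolding EE_def by blast
  then show "EE k G (\<sigma>(p \<mapsto> True)) \<or> EE k G (\<sigma>(p \<mapsto> False))" by (cases r) auto
next
  have le: "\<sigma> \<subseteq>\<^sub>m \<sigma>(p \<mapsto> r)" for r using assms(1) by (auto simp: map_le_def)
  assume "EE k G (\<sigma>(p \<mapsto> True)) \<or> EE k G (\<sigma>(p \<mapsto> False))"
  then show "EE k G \<sigma>" unfolding EE_def using le map_le_trans by blast
qed

lemma splits_sem:
  assumes X: "X = splits k @ Y" and base: "\<forall>\<sigma>. dom \<sigma> = {1..k} \<longrightarrow> sexec X b (k + 1) \<sigma> (G \<sigma>)"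
  shows "dd \<le> k \<Longrightarrow> dom \<sigma> = {1..k - dd} \<Longrightarrow> sexec X b (k - dd + 1) \<sigma> (EE k G \<sigma>)"
proof (induction dd arbitrary: \<sigma>)
  case 0
  then show ?case using base EE_full by simp
next
  case (Suc dd)
  let ?j = "k - Suc dd"
  let ?p = "Suc ?j"
  have at: "X ! (?p - 1) = Plain (Split ?p)" using X Suc.prems(1)
    by (auto simp: nth_append splits_def)
  have len: "1 \<le> ?p" "?p \<le> length X" using X Suc.prems(1) by auto
  have "?p \<notin> dom \<sigma>" using Suc.prems(2) by simp
  then have none: "\<sigma> ?p = None" by (simp add: domIff)
  have kd: "k - dd = Suc ?j" using Suc.prems(1) by simp
  have dom: "dom (\<sigma>(?p \<mapsto> r)) = {1..k - dd}" for r using Suc.prems(2) kd by auto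
  have ih: "sexec X b (nxt (X ! (?p - 1)) r ?p) (\<sigma>(?p \<mapsto> r)) (EE k G (\<sigma>(?p \<mapsto> r)))" for r
  proof -
    have nx: "nxt (X ! (?p - 1)) r ?p = k - dd + 1" using at kd by simp
    show ?thesis unfolding nx by (rule Suc.IH[OF _ dom[of r]]) (use Suc.prems(1) in simp)
  qed
  have "sexec X b ?p \<sigma> (EE k G (\<sigma>(?p \<mapsto> True)) \<or> EE k G (\<sigma>(?p \<mapsto> False)))"
    using sexec.ssplit[OF len, of "?p" \<sigma>] at none ih by simp
  moreover have "?p \<in> {1..k}" using Suc.prems(1) by auto
  ultimately have e: "EE k G \<sigma> = (EE k G (\<sigma>(?p \<mapsto> True)) \<or> EE k G (\<sigma>(?p \<mapsto> False)))"
    using EE_split[of \<sigma> ?p k G, OF none] by blast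
  have "k - Suc dd + 1 = ?p" by simp
  then show ?case using \<open>sexec X b ?p \<sigma> _\<close> e by metis
qed

definition lsof :: "lit set \<Rightarrow> lit list" where
  "lsof C = (SOME xs. set xs = C \<and> distinct xs)"

lemma lsof: "finite C \<Longrightarrow> set (lsof C) = C \<and> length (lsof C) = card C"
  unfolding lsof_def using finite_distinct_list someI_ex
  by (metis (mono_tags, lifting) distinct_card)

definition items :: "(nat \<Rightarrow> nat \<Rightarrow> lit set) \<Rightarrow> nat \<Rightarrow> (nat \<times> lit list) list" where
  "items alpha k = map (\<lambda>c. (c, lsof (alpha k c))) [1..<Suc (d k)]"

definition memprog :: "(nat \<Rightarrow> nat \<Rightarrow> lit set) \<Rightarrow> nat \<Rightarrow> prim list" where
  "memprog alpha n = splits (kof n) @ code (items alpha (kof n))"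

lemma var_lits: "l \<in> lits k \<Longrightarrow> var l \<in> {1..k}"
  by (auto simp: lits_def)

lemma Lk_finite: "C \<in> Lk k \<Longrightarrow> finite C"
  unfolding Lk_def using card.infinite by fastforce

lemma litv_eq:
  assumes "dom \<sigma> = {1..k}" "var l \<in> {1..k}"
  shows "litv \<sigma> l = lit_val (\<lambda>v. \<sigma> v = Some True) l"
proof -
  have "var l \<in> dom \<sigma>" using assms by simp
  then obtain r where "\<sigma> (var l) = Some r" by blast
  then show ?thesis by (cases l; cases r) auto
qed

lemma lit_val_eq:
  assumes "var l \<in> {1..k}"
  shows "litv (\<lambda>v. if v \<in> {1..k} then Some (\<tau> v) else None) l = lit_val \<tau> l"
  using assms by (cases l) auto

lemma length_code: "\<forall>(c, ls)\<in>set its. length ls \<le> 3 \<Longrightarrow> length (code its) \<le> 9 * length its + 2"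
  by (induction its rule: code.induct) auto

lemma code_ne: "code its \<noteq> []"
  by (induction its rule: code.induct) (auto simp: blk_def)

lemma basics_append: "basics (A @ B) = basics A \<union> basics B"
  by (auto simp: basics_def)

lemma basics_Cons: "basics (u # A) = (case basic_of u of Some a \<Rightarrow> {a} | None \<Rightarrow> {}) \<union> basics A"
  by (auto simp: basics_def split: option.splits)

lemma basics_chk: "basics (chk ls) \<subseteq> {Reply (var l) | l. l \<in> set ls}"
proof (induction ls)
  case Nil then show ?case by (simp add: basics_Cons basics_def)
next
  case (Cons l ls)
  have "basic_of (test l) = Some (Reply (var l))" by (cases l) auto
  then show ?case using Cons by (auto simp: basics_Cons)
qed

lemma basics_code:
  "\<forall>(c, ls)\<in>set its. 1 \<le> c \<and> (\<forall>l\<in>set ls. 1 \<le> var l) \<Longrightarrow>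
   basics (code its) \<subseteq> {Reg (In i) Get | i. i \<ge> 1} \<union> {Reg Out (Set True)} \<union> {Reply i | i. i \<ge> 1}"
proof (induction its rule: code.induct)
  case 1 then show ?case by (simp add: basics_Cons basics_def)
next
  case (2 c ls r)
  then show ?case using basics_chk[of ls]
    by (auto simp: blk_def basics_append basics_Cons)
qed

lemma basics_splits: "basics (splits k) \<subseteq> {Split i | i. i \<ge> 1}"
  by (auto simp: basics_def splits_def)



lemma membership:
  assumes adm: "admissible_alpha alpha"
  shows "sat3C alpha \<in> P_lsis"
proof -
  have bij: "bij_betw (alpha k) {1..d k} (Lk k)" for k using adm by (simp add: admissible_alpha_def)
  have inL: "c \<in> {1..d k} \<Longrightarrow> alpha k c \<in> Lk k" for c k using bij[of k] bij_betwE by blast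
  have good: "set (lsof (alpha k c)) = alpha k c \<and> length (lsof (alpha k c)) \<le> 3
      \<and> alpha k c \<subseteq> lits k" if "c \<in> {1..d k}" for c k
    using inL[OF that] lsof[OF Lk_finite[OF inL[OF that]]] by (auto simp: Lk_def)
  have main: "split_computes (memprog alpha n) n (sat3C alpha n) \<and>
      length (memprog alpha n) \<le> poly [:2, 10:] n" for n
  proof -
    let ?k = "kof n"
    let ?X = "memprog alpha n"
    have kn: "d ?k \<le> n" using kof_prop by blast
    have kk: "?k \<le> d ?k" by (rule d_ge)
    have its: "\<forall>(c, ls)\<in>set (items alpha ?k). c \<in> {1..d ?k} \<and> ls = lsof (alpha ?k c)"
      by (auto simp: items_def)
    have len: "length ?X \<le> poly [:2, 10:] n"
    proof -
      have "length (code (items alpha ?k)) \<le> 9 * length (items alpha ?k) + 2"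
        using its good by (intro length_code) auto
      moreover have "length ?X = ?k + length (code (items alpha ?k))" by (simp add: memprog_def)
      moreover have "length (items alpha ?k) = d ?k" by (simp add: items_def)
      moreover have "poly [:2, 10:] n = 2 + 10 * n" by simp
      ultimately show ?thesis using kn kk by linarith
    qed
    have sis: "?X \<in> SIS_br"
    proof -
      have "basics (code (items alpha ?k)) \<subseteq> {Reg (In i) Get | i. i \<ge> 1} \<union> {Reg Out (Set True)} \<union> {Reply i | i. i \<ge> 1}"
      proof (rule basics_code, safe)
        fix c ls assume "(c, ls) \<in> set (items alpha ?k)"
        then have "c \<in> {1..d ?k}" "ls = lsof (alpha ?k c)" using its by auto
        then show "1 \<le> c" by auto
        fix l assume "l \<in> set ls"
        then show "1 \<le> var l" using good var_lits \<open>c \<in> {1..d ?k}\<close> \<open>ls = _\<close> by fastforce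
      qed
      then show ?thesis using basics_splits[of ?k]
        using code_ne[of "items alpha ?k"] by (auto simp: SIS_br_def memprog_def basics_append)
    qed
    have comp: "\<exists>t. sexec ?X b 1 Map.empty t \<and> (sat3C alpha n b \<longleftrightarrow> t)" if lb: "length b = n" for b
    proof -
      let ?G = "\<lambda>\<sigma>. \<forall>(c, ls)\<in>set (items alpha ?k). b ! (c - 1) \<longrightarrow> (\<exists>l\<in>set ls. litv \<sigma> l)"
      have base: "\<forall>\<sigma>. dom \<sigma> = {1..?k} \<longrightarrow> sexec ?X b (?k + 1) \<sigma> (?G \<sigma>)"
      proof (intro allI impI)
        fix \<sigma> :: "nat \<Rightarrow> bool option" assume dom: "dom \<sigma> = {1..?k}"
        have "sexec ?X b (length (splits ?k) + 1) \<sigma> (?G \<sigma>)"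
        proof (rule code_sem)
          show "?X = splits ?k @ code (items alpha ?k)" by (simp add: memprog_def)
          show "\<forall>(c, ls)\<in>set (items alpha ?k). 1 \<le> c \<and> c \<le> length b \<and> (\<forall>l\<in>set ls. \<sigma> (var l) \<noteq> None)"
          proof (intro ballI, clarify)
            fix c ls assume "(c, ls) \<in> set (items alpha ?k)"
            then have c: "c \<in> {1..d ?k}" "ls = lsof (alpha ?k c)" using its by auto
            have "\<sigma> (var l) \<noteq> None" if "l \<in> set ls" for l
            proof -
              have "l \<in> lits ?k" using good[OF c(1)] c(2) that by auto
              then have "var l \<in> dom \<sigma>" using var_lits dom by blast
              then show ?thesis by (simp add: domIff)
            qed
            then show "1 \<le> c \<and> c \<le> length b \<and> (\<forall>l\<in>set ls. \<sigma> (var l) \<noteq> None)"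
              using c kn lb by auto
          qed
        qed
        then show "sexec ?X b (?k + 1) \<sigma> (?G \<sigma>)" by simp
      qed
      have "sexec ?X b (?k - ?k + 1) Map.empty (EE ?k ?G Map.empty)"
        by (rule splits_sem[OF _ base]) (auto simp: memprog_def)
      then have ex: "sexec ?X b 1 Map.empty (EE ?k ?G Map.empty)" by simp
      have eq: "sat3C alpha n b \<longleftrightarrow> EE ?k ?G Map.empty"
      proof
        assume "sat3C alpha n b"
        then obtain \<tau> where \<tau>: "\<forall>i\<in>{1..d ?k}. b ! (i - 1) \<longrightarrow> (\<exists>l\<in>alpha ?k i. lit_val \<tau> l)"
          unfolding sat3C_def Let_def by blast
        define \<sigma> where "\<sigma> = (\<lambda>v. if v \<in> {1..?k} then Some (\<tau> v) else None)"
        have "dom \<sigma> = {1..?k}" by (auto simp: \<sigma>_def split: if_splits)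
        moreover have "?G \<sigma>"
        proof safe
          fix c ls assume "(c, ls) \<in> set (items alpha ?k)" "b ! (c - 1)"
          then have c: "c \<in> {1..d ?k}" "ls = lsof (alpha ?k c)" and bc: "b ! (c - 1)" using its by auto
          then obtain l where l: "l \<in> alpha ?k c" "lit_val \<tau> l" using \<tau> by blast
          then have "var l \<in> {1..?k}" using good[OF c(1)] var_lits by blast
          then have "litv \<sigma> l" using lit_val_eq l(2) unfolding \<sigma>_def by blast
          then show "\<exists>l\<in>set ls. litv \<sigma> l" using l good[OF c(1)] c(2) by blast
        qed
        ultimately show "EE ?k ?G Map.empty" unfolding EE_def by (auto simp: map_le_def)
      next
        assume "EE ?k ?G Map.empty"
        then obtain \<sigma> where s: "dom \<sigma> = {1..?k}" "?G \<sigma>" unfolding EE_def by blast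
        have "\<forall>i\<in>{1..d ?k}. b ! (i - 1) \<longrightarrow> (\<exists>l\<in>alpha ?k i. lit_val (\<lambda>v. \<sigma> v = Some True) l)"
        proof safe
          fix i assume i: "i \<in> {1..d ?k}" "b ! (i - 1)"
          have "(i, lsof (alpha ?k i)) \<in> set (items alpha ?k)" unfolding items_def set_map using i(1) by (intro imageI) (auto simp del: upt_Suc)
          then obtain l where l: "l \<in> set (lsof (alpha ?k i))" "litv \<sigma> l" using s(2) i(2) by fastforce
          then have "l \<in> alpha ?k i" using good[OF i(1)] by simp
          moreover have "var l \<in> {1..?k}" using good[OF i(1)] var_lits \<open>l \<in> alpha ?k i\<close> by blast
          ultimately show "\<exists>l\<in>alpha ?k i. lit_val (\<lambda>v. \<sigma> v = Some True) l"
            using litv_eq[OF s(1)] l(2) by blast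
        qed
        then show "sat3C alpha n b" unfolding sat3C_def Let_def by blast
      qed
      show ?thesis using ex eq by blast
    qed
    show ?thesis using sis comp len by (simp add: split_computes_def)
  qed
  show ?thesis unfolding P_lsis_def using main by blast
qed



section \<open>Reduction: encoding of splitting instruction sequences\<close>

definition PX :: "iseq \<Rightarrow> nat set" where
  "PX X = {p. Split p \<in> basics X \<or> Reply p \<in> basics X}"

definition pvar :: "iseq \<Rightarrow> nat \<Rightarrow> nat" where
  "pvar X p = length X + 1 + card {q \<in> PX X. q < p}"

datatype cnd = Always | IfT nat | IfF nat

fun holds :: "bool list \<Rightarrow> cnd \<Rightarrow> bool" where
  "holds b Always = True"
| "holds b (IfT j) = b ! (j - 1)"
| "holds b (IfF j) = (\<not> b ! (j - 1))"

fun cok :: "nat \<Rightarrow> cnd \<Rightarrow> bool" where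
  "cok n Always = True"
| "cok n (IfT j) = (1 \<le> j \<and> j \<le> n)"
| "cok n (IfF j) = (1 \<le> j \<and> j \<le> n)"

definition rep :: "iseq \<Rightarrow> nat \<Rightarrow> prim \<Rightarrow> nat \<Rightarrow> (lit set \<times> cnd) list" where
  "rep X i u p = [({Neg i, Neg (pvar X p), Pos (nxt u True i)}, Always),
                  ({Neg i, Pos (pvar X p), Pos (nxt u False i)}, Always)]"

fun gen_b :: "iseq \<Rightarrow> nat \<Rightarrow> nat \<Rightarrow> prim \<Rightarrow> basic \<Rightarrow> (lit set \<times> cnd) list" where
  "gen_b X n i u (Reg (In j) Get) = (if 1 \<le> j \<and> j \<le> n then
      [({Neg i, Pos (nxt u True i)}, IfT j), ({Neg i, Pos (nxt u False i)}, IfF j)] else [])"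
| "gen_b X n i u (Split p) = rep X i u p"
| "gen_b X n i u (Reply p) = rep X i u p"
| "gen_b X n i u _ = []"

fun gen_u :: "iseq \<Rightarrow> nat \<Rightarrow> nat \<Rightarrow> prim \<Rightarrow> (lit set \<times> cnd) list" where
  "gen_u X n i Term = [({Neg i}, Always)]"
| "gen_u X n i (Jump l) = [({Neg i, Pos (i + l)}, Always)]"
| "gen_u X n i (Plain a) = gen_b X n i (Plain a) a"
| "gen_u X n i (PosT a) = gen_b X n i (PosT a) a"
| "gen_u X n i (NegT a) = gen_b X n i (NegT a) a"

definition gat :: "iseq \<Rightarrow> nat \<Rightarrow> nat \<Rightarrow> (lit set \<times> cnd) list" where
  "gat X n i = gen_u X n i (X ! (i - 1))"

definition gens :: "iseq \<Rightarrow> nat \<Rightarrow> (lit set \<times> cnd) list" where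
  "gens X n = ({Pos 1}, Always) # concat (map (gat X n) [1..<Suc (length X)])"

definition Cl :: "iseq \<Rightarrow> nat \<Rightarrow> bool list \<Rightarrow> lit set set" where
  "Cl X n b = {C. \<exists>cd. (C, cd) \<in> set (gens X n) \<and> holds b cd}"

lemma gat_basic: "basic_of (X ! (i - 1)) = Some a \<Longrightarrow> gat X n i = gen_b X n i (X ! (i - 1)) a"
  by (cases "X ! (i - 1)") (auto simp: gat_def)

lemma gat_in: "1 \<le> i \<Longrightarrow> i \<le> length X \<Longrightarrow> x \<in> set (gat X n i) \<Longrightarrow> x \<in> set (gens X n)"
  unfolding gens_def by (auto simp del: upt_Suc intro!: bexI[of _ i])

lemma gen_b_props: "x \<in> set (gen_b X n i u a) \<Longrightarrow> Neg i \<in> fst x \<and> cok n (snd x) \<and>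
   (\<forall>l\<in>fst x. l = Neg i \<or> (\<exists>y. l = Pos y) \<or> (\<exists>p. l = Neg (pvar X p)))"
  by (induction X n i u a rule: gen_b.induct) (auto simp: rep_def split: if_splits)

lemma gat_props: "x \<in> set (gat X n i) \<Longrightarrow> Neg i \<in> fst x \<and> cok n (snd x) \<and>
   (\<forall>l\<in>fst x. l = Neg i \<or> (\<exists>y. l = Pos y) \<or> (\<exists>p. l = Neg (pvar X p)))"
  unfolding gat_def by (cases "X ! (i - 1)") (auto dest: gen_b_props)

lemma length_gen_b: "length (gen_b X n i u a) \<le> 2"
  by (induction X n i u a rule: gen_b.induct) (auto simp: rep_def)

lemma length_gat: "length (gat X n i) \<le> 2"
  unfolding gat_def by (cases "X ! (i - 1)") (auto simp: length_gen_b)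

lemma length_concat_le: "(\<And>x. length (f x) \<le> c) \<Longrightarrow> length (concat (map f xs)) \<le> c * length xs"
proof (induction xs)
  case Nil then show ?case by simp
next
  case (Cons x xs)
  have "length (f x) \<le> c" by (rule Cons.prems)
  moreover have "length (concat (map f xs)) \<le> c * length xs" using Cons by blast
  ultimately show ?case by simp
qed

lemma length_gens: "length (gens X n) \<le> 2 * length X + 1"
proof -
  have "length (concat (map (gat X n) [1..<Suc (length X)])) \<le> 2 * length [1..<Suc (length X)]"
    by (rule length_concat_le[OF length_gat])
  then show ?thesis unfolding gens_def by (simp del: upt_Suc)
qed

definition pp :: "prim \<Rightarrow> nat" where
  "pp u = (case basic_of u of Some (Split p) \<Rightarrow> p | Some (Reply p) \<Rightarrow> p | _ \<Rightarrow> 0)"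

lemma PX_sub: "PX X \<subseteq> pp ` set X"
proof
  fix p assume "p \<in> PX X"
  then obtain u where u: "u \<in> set X" "basic_of u = Some (Split p) \<or> basic_of u = Some (Reply p)"
    unfolding PX_def basics_def by blast
  have "pp u = p" using u(2) by (auto simp: pp_def)
  then show "p \<in> pp ` set X" using u(1) by (metis image_eqI)
qed

lemma PX_finite: "finite (PX X)"
  by (rule finite_subset[OF PX_sub]) simp

lemma PX_card: "card (PX X) \<le> length X"
proof -
  have "card (PX X) \<le> card (pp ` set X)" using PX_sub by (intro card_mono) auto
  also have "\<dots> \<le> card (set X)" by (rule card_image_le) simp
  also have "\<dots> \<le> length X" by (rule card_length)
  finally show ?thesis .
qed

lemma pvar_gt: "length X < pvar X p"
  by (simp add: pvar_def)

lemma pvar_le: "p \<in> PX X \<Longrightarrow> pvar X p \<le> 2 * length X"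
proof -
  assume p: "p \<in> PX X"
  have "{q \<in> PX X. q < p} \<subset> PX X" using p by auto
  then have "card {q \<in> PX X. q < p} < card (PX X)" using PX_finite by (rule psubset_card_mono[rotated])
  then show ?thesis using PX_card[of X] by (simp add: pvar_def)
qed

lemma pvar_inj: "inj_on (pvar X) (PX X)"
proof (rule inj_onI, rule ccontr)
  fix p q assume h: "p \<in> PX X" "q \<in> PX X" "pvar X p = pvar X q" "p \<noteq> q"
  have lt: "card {r \<in> PX X. r < a} < card {r \<in> PX X. r < c}" if "a \<in> PX X" "c \<in> PX X" "a < c" for a c
  proof (rule psubset_card_mono)
    show "finite {r \<in> PX X. r < c}" using PX_finite by simp
    show "{r \<in> PX X. r < a} \<subset> {r \<in> PX X. r < c}" using that by auto
  qed
  show False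
  proof (cases "p < q")
    case True then show ?thesis using lt[of p q] h by (simp add: pvar_def)
  next
    case False then have "q < p" using h by simp
    then show ?thesis using lt[of q p] h by (simp add: pvar_def)
  qed
qed

lemma in_PX:
  assumes "1 \<le> i" "i \<le> length X" "basic_of (X ! (i - 1)) = Some (Split p) \<or> basic_of (X ! (i - 1)) = Some (Reply p)"
  shows "p \<in> PX X"
proof -
  have "X ! (i - 1) \<in> set X" using assms(1,2) by simp
  then show ?thesis using assms(3) unfolding PX_def basics_def by blast
qed



lemma sreply_cases:
  "sreply b \<sigma> a = Some (r, w) \<Longrightarrow>
   (\<exists>j. a = Reg (In j) Get \<and> 1 \<le> j \<and> j \<le> length b \<and> r = b ! (j - 1) \<and> \<not> w)
   \<or> (a = Reg Out (Set True) \<and> w)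
   \<or> (\<exists>p. a = Reply p \<and> \<sigma> p = Some r \<and> \<not> w)"
  by (induction b \<sigma> a rule: sreply.induct) (auto split: if_splits)

lemma Lk_intro:
  assumes "A \<subseteq> lits k" "A \<noteq> {}" "finite A" "card A \<le> 3"
  shows "A \<in> Lk k"
  using assms by (auto simp: Lk_def Suc_le_eq card_gt_0_iff)

lemma card3: "card {a, b, c} \<le> 3"
  by (simp add: card_insert_if)

lemma Neg_lits: "1 \<le> i \<Longrightarrow> i \<le> k \<Longrightarrow> Neg i \<in> lits k"
  by (auto simp: lits_def)

lemma Pos_lits: "1 \<le> i \<Longrightarrow> i \<le> k \<Longrightarrow> Pos i \<in> lits k"
  by (auto simp: lits_def)

definition asg :: "iseq \<Rightarrow> (nat \<Rightarrow> bool) \<Rightarrow> nat set \<Rightarrow> nat \<Rightarrow> bool" where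
  "asg X \<tau> S x = (if x \<le> length X then x \<in> S else \<tau> (the_inv_into (PX X) (pvar X) x))"

lemma asg_pv: "p \<in> PX X \<Longrightarrow> asg X \<tau> S (pvar X p) = \<tau> p"
  using pvar_gt[of X p] the_inv_into_f_f[OF pvar_inj] by (simp add: asg_def)

definition ok_at :: "iseq \<Rightarrow> nat \<Rightarrow> bool list \<Rightarrow> (nat \<Rightarrow> bool) \<Rightarrow> nat set \<Rightarrow> nat \<Rightarrow> bool" where
  "ok_at X n b \<tau> S j = (\<forall>x\<in>set (gat X n j). holds b (snd x) \<longrightarrow> (\<exists>l\<in>fst x. lit_val (asg X \<tau> S) l))"

lemma ok_mono:
  assumes "j \<in> S" "S \<subseteq> S'" "S' \<subseteq> {1..length X}" "ok_at X n b \<tau> S j"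
  shows "ok_at X n b \<tau> S' j"
  unfolding ok_at_def
proof (intro ballI impI)
  fix x assume x: "x \<in> set (gat X n j)" "holds b (snd x)"
  then obtain l where l: "l \<in> fst x" "lit_val (asg X \<tau> S) l" using assms(4) unfolding ok_at_def by blast
  have jL: "j \<le> length X" using assms(1-3) by auto
  have "l = Neg j \<or> (\<exists>y. l = Pos y) \<or> (\<exists>p. l = Neg (pvar X p))" using gat_props[OF x(1)] l(1) by blast
  then have "lit_val (asg X \<tau> S') l"
  proof (elim disjE exE)
    assume "l = Neg j" then show ?thesis using l(2) assms(1) jL by (simp add: asg_def)
  next
    fix y assume "l = Pos y" then show ?thesis using l(2) assms(2) by (auto simp: asg_def split: if_splits)
  next
    fix p assume "l = Neg (pvar X p)" then show ?thesis using l(2) pvar_gt[of X p] by (simp add: asg_def)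
  qed
  then show "\<exists>l\<in>fst x. lit_val (asg X \<tau> S') l" using l(1) by blast
qed

lemma ok_extend:
  assumes "i \<in> {1..length X}" "S \<subseteq> {1..length X}" "\<forall>j\<in>S. ok_at X n b \<tau> S j"
    "ok_at X n b \<tau> (insert i S) i"
  shows "\<forall>j\<in>insert i S. ok_at X n b \<tau> (insert i S) j"
  using assms ok_mono[of _ S "insert i S" X n b \<tau>] by auto

lemma rep_ok:
  assumes "p \<in> PX X" "\<tau> p = r" "nxt u r i \<in> S" "S \<subseteq> {1..length X}"
  shows "\<forall>x\<in>set (rep X i u p). \<exists>l\<in>fst x. lit_val (asg X \<tau> S) l"
proof -
  have nx: "asg X \<tau> S (nxt u r i)" using assms(3,4) by (auto simp: asg_def)
  show ?thesis using nx asg_pv[OF assms(1), of \<tau> S] assms(2) unfolding rep_def by (cases r) auto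
qed

lemma dir_a:
  assumes "sexec X b i \<sigma> t" "length b = n" "t"
  shows "\<exists>\<tau> S. (\<forall>p r. \<sigma> p = Some r \<longrightarrow> \<tau> p = r) \<and> i \<in> S \<and> S \<subseteq> {1..length X} \<and> (\<forall>j\<in>S. ok_at X n b \<tau> S j)"
  using assms(1,3)
proof (induction rule: sexec.induct)
  case (sterm i \<sigma>)
  then show ?case by simp
next
  case (sjump i l \<sigma> t)
  then obtain \<tau> S where tS: "\<forall>p r. \<sigma> p = Some r \<longrightarrow> \<tau> p = r" "i + l \<in> S" "S \<subseteq> {1..length X}"
    "\<forall>j\<in>S. ok_at X n b \<tau> S j" by blast
  have "ok_at X n b \<tau> (insert i S) i"
    using sjump.hyps(3) tS(2,3) by (auto simp: ok_at_def gat_def asg_def)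
  then have all: "\<forall>j\<in>insert i S. ok_at X n b \<tau> (insert i S) j"
    by (intro ok_extend) (use tS sjump.hyps(1,2) in auto)
  have S': "insert i S \<subseteq> {1..length X}" using tS(3) sjump.hyps(1,2) by auto
  show ?case using tS(1) all S' by blast
next
  case (sbasic i a \<sigma> r w t)
  show ?case
  proof (cases w)
    case True
    then have a: "a = Reg Out (Set True)" using sreply_cases[OF sbasic.hyps(4)] by auto
    define \<tau> where "\<tau> = (\<lambda>p. case \<sigma> p of Some r \<Rightarrow> r | None \<Rightarrow> False)"
    have "ok_at X n b \<tau> {i} i" using gat_basic[OF sbasic.hyps(3)] a by (simp add: ok_at_def)
    then show ?thesis using sbasic.hyps(1,2) by (intro exI[of _ \<tau>] exI[of _ "{i}"]) (auto simp: \<tau>_def)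
  next
    case False
    then have "t" using sbasic.prems by simp
    then obtain \<tau> S where tS: "\<forall>p r. \<sigma> p = Some r \<longrightarrow> \<tau> p = r" "nxt (X ! (i - 1)) r i \<in> S"
      "S \<subseteq> {1..length X}" "\<forall>j\<in>S. ok_at X n b \<tau> S j" using sbasic.IH by blast
    let ?S = "insert i S"
    have S': "?S \<subseteq> {1..length X}" using tS(3) sbasic.hyps(1,2) by auto
    have nx: "asg X \<tau> ?S (nxt (X ! (i - 1)) r i)" using tS(2,3) by (auto simp: asg_def)
    have "ok_at X n b \<tau> ?S i"
      using sreply_cases[OF sbasic.hyps(4)]
    proof (elim disjE exE conjE)
      fix j assume j: "a = Reg (In j) Get" "1 \<le> j" "j \<le> length b" "r = b ! (j - 1)"
      show ?thesis unfolding ok_at_def gat_basic[OF sbasic.hyps(3)] using j nx assms(2)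
        by (cases r) auto
    next
      assume "a = Reg Out (Set True)"
      then show ?thesis unfolding ok_at_def gat_basic[OF sbasic.hyps(3)] by simp
    next
      fix p assume p: "a = Reply p" "\<sigma> p = Some r"
      have pP: "p \<in> PX X" using in_PX[of i X p] sbasic.hyps(1-3) p(1) by auto
      have tpr: "\<tau> p = r" using tS(1) p(2) by blast
      have nS: "nxt (X ! (i - 1)) r i \<in> ?S" using tS(2) by simp
      show ?thesis unfolding ok_at_def gat_basic[OF sbasic.hyps(3)] using rep_ok[of p X \<tau> r "X ! (i - 1)" i ?S, OF pP tpr nS S'] p(1)
        by auto
    qed
    then have all: "\<forall>j\<in>?S. ok_at X n b \<tau> ?S j"
      by (intro ok_extend) (use tS sbasic.hyps(1,2) in auto)
    show ?thesis using tS(1) all S' by blast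
  qed
next
  case (ssplit i p \<sigma> t1 t2)
  have pP: "p \<in> PX X" using in_PX[of i X p] ssplit.hyps(1-3) by auto
  obtain r where r: "if r then t1 else t2" using ssplit.prems by (metis (full_types))
  have "\<exists>\<tau> S. (\<forall>q s. (\<sigma>(p \<mapsto> r)) q = Some s \<longrightarrow> \<tau> q = s) \<and> nxt (X ! (i - 1)) r i \<in> S \<and>
      S \<subseteq> {1..length X} \<and> (\<forall>j\<in>S. ok_at X n b \<tau> S j)"
    using ssplit.IH r by (cases r) auto
  then obtain \<tau> S where tS: "\<forall>q s. (\<sigma>(p \<mapsto> r)) q = Some s \<longrightarrow> \<tau> q = s" "nxt (X ! (i - 1)) r i \<in> S"
      "S \<subseteq> {1..length X}" "\<forall>j\<in>S. ok_at X n b \<tau> S j" by blast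
  let ?S = "insert i S"
  have S': "?S \<subseteq> {1..length X}" using tS(3) ssplit.hyps(1,2) by auto
  have tp: "\<tau> p = r" using tS(1) by auto
  have "ok_at X n b \<tau> ?S i"
    unfolding ok_at_def gat_basic[OF ssplit.hyps(3)] using rep_ok[of p X \<tau> r "X ! (i - 1)" i ?S, OF pP tp _ S'] tS(2) by simp
  then have all: "\<forall>j\<in>?S. ok_at X n b \<tau> ?S j"
    by (intro ok_extend) (use tS ssplit.hyps(1,2) in auto)
  have cons: "\<forall>q s. \<sigma> q = Some s \<longrightarrow> \<tau> q = s" using tS(1) ssplit.hyps(4)
    by (metis fun_upd_other option.distinct(1))
  show ?case using all cons S' by blast
qed



lemma use_cl:
  assumes H: "\<forall>C\<in>Cl X n b \<inter> Lk (2 * length X). \<exists>l\<in>C. lit_val \<nu> l"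
    and x: "x \<in> set (gat X n i)" "1 \<le> i" "i \<le> length X" "holds b (snd x)" "fst x \<in> Lk (2 * length X)"
  shows "\<exists>l\<in>fst x. lit_val \<nu> l"
proof -
  have "(fst x, snd x) \<in> set (gens X n)" using gat_in[OF x(2,3,1)] by simp
  then have "fst x \<in> Cl X n b" using x(4) unfolding Cl_def by blast
  then show ?thesis using H x(5) by blast
qed

lemma card2: "card {a, b} \<le> 3"
  by (simp add: card_insert_if)

lemma rep_use:
  assumes H: "\<forall>C\<in>Cl X n b \<inter> Lk (2 * length X). \<exists>l\<in>C. lit_val \<nu> l"
    and sub: "set (rep X i u p) \<subseteq> set (gat X n i)" and pP: "p \<in> PX X"
    and i: "1 \<le> i" "i \<le> length X" and nx: "1 \<le> nxt u r i" "nxt u r i \<le> length X"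
    and v: "\<nu> (pvar X p) = r" "\<nu> i"
  shows "\<nu> (nxt u r i)"
proof -
  have pv: "1 \<le> pvar X p" "pvar X p \<le> 2 * length X" using pvar_gt[of X p] pvar_le[OF pP] by auto
  let ?x = "if r then ({Neg i, Neg (pvar X p), Pos (nxt u True i)}, Always)
            else ({Neg i, Pos (pvar X p), Pos (nxt u False i)}, Always)"
  have xin: "?x \<in> set (gat X n i)" using sub by (auto simp: rep_def)
  have "fst ?x \<in> Lk (2 * length X)"
    using i nx pv by (cases r) (auto intro!: Lk_intro card3 Neg_lits Pos_lits)
  then have "\<exists>l\<in>fst ?x. lit_val \<nu> l" using use_cl[OF H xin i] by simp
  then show ?thesis using v by (cases r) auto
qed

lemma dir_b:
  assumes "sexec X b i \<sigma> t" "length b = n" and H: "\<forall>C\<in>Cl X n b \<inter> Lk (2 * length X). \<exists>l\<in>C. lit_val \<nu> l"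
  shows "(\<forall>p r. \<sigma> p = Some r \<longrightarrow> \<nu> (pvar X p) = r) \<Longrightarrow> \<nu> i \<Longrightarrow> t"
  using assms(1)
proof (induction rule: sexec.induct)
  case (sterm i \<sigma>)
  have xin: "({Neg i}, Always) \<in> set (gat X n i)" using sterm.hyps(3) by (simp add: gat_def)
  have "{Neg i} \<in> Lk (2 * length X)" using sterm.hyps(1,2) by (auto intro!: Lk_intro Neg_lits)
  then have "\<exists>l\<in>{Neg i}. lit_val \<nu> l" using use_cl[OF H xin sterm.hyps(1,2)] by simp
  then show ?case using sterm.prems by simp
next
  case (sjump i l \<sigma> t)
  have v: "1 \<le> i + l" "i + l \<le> length X" using sexec_valid[OF sjump.hyps(5)] by auto
  have xin: "({Neg i, Pos (i + l)}, Always) \<in> set (gat X n i)" using sjump.hyps(3) by (simp add: gat_def)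
  have "{Neg i, Pos (i + l)} \<in> Lk (2 * length X)" using sjump.hyps(1,2) v
    by (auto intro!: Lk_intro Neg_lits Pos_lits card2)
  then have "\<exists>l'\<in>{Neg i, Pos (i + l)}. lit_val \<nu> l'" using use_cl[OF H xin sjump.hyps(1,2)] by simp
  then have "\<nu> (i + l)" using sjump.prems by auto
  then show ?case using sjump.IH sjump.prems by blast
next
  case (sbasic i a \<sigma> r w t)
  let ?u = "X ! (i - 1)"
  have v: "1 \<le> nxt ?u r i" "nxt ?u r i \<le> length X" using sexec_valid[OF sbasic.hyps(5)] by auto
  have g: "gat X n i = gen_b X n i ?u a" by (rule gat_basic[OF sbasic.hyps(3)])
  show ?case
    using sreply_cases[OF sbasic.hyps(4)]
  proof (elim disjE exE conjE)
    fix j assume j: "a = Reg (In j) Get" "1 \<le> j" "j \<le> length b" "r = b ! (j - 1)" "\<not> w"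
    let ?x = "({Neg i, Pos (nxt ?u r i)}, if r then IfT j else IfF j)"
    have xin: "?x \<in> set (gat X n i)" using g j assms(2) by (cases r) auto
    have "fst ?x \<in> Lk (2 * length X)" using sbasic.hyps(1,2) v
      by (auto intro!: Lk_intro Neg_lits Pos_lits card2)
    moreover have "holds b (snd ?x)" using j by (cases r) auto
    ultimately have "\<exists>l'\<in>fst ?x. lit_val \<nu> l'" using use_cl[OF H xin sbasic.hyps(1,2)] by simp
    then have "\<nu> (nxt ?u r i)" using sbasic.prems by auto
    then show ?thesis using sbasic.IH sbasic.prems by blast
  next
    assume "w" then show ?thesis by simp
  next
    fix p assume p: "a = Reply p" "\<sigma> p = Some r" "\<not> w"
    have pP: "p \<in> PX X" using in_PX[of i X p] sbasic.hyps(1-3) p(1) by auto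
    have "\<nu> (pvar X p) = r" using sbasic.prems(1) p(2) by blast
    then have "\<nu> (nxt ?u r i)"
      using rep_use[OF H _ pP sbasic.hyps(1,2) v] g p(1) sbasic.prems(2) by simp
    then show ?thesis using sbasic.IH sbasic.prems by blast
  qed
next
  case (ssplit i p \<sigma> t1 t2)
  let ?u = "X ! (i - 1)"
  let ?r = "\<nu> (pvar X p)"
  have pP: "p \<in> PX X" using in_PX[of i X p] ssplit.hyps(1-3) by auto
  have g: "gat X n i = gen_b X n i ?u (Split p)" by (rule gat_basic[OF ssplit.hyps(3)])
  have v: "1 \<le> nxt ?u ?r i" "nxt ?u ?r i \<le> length X"
    using sexec_valid[OF ssplit.hyps(5)] sexec_valid[OF ssplit.hyps(6)] by (cases ?r; auto)+
  have nx: "\<nu> (nxt ?u ?r i)"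
    using rep_use[OF H _ pP ssplit.hyps(1,2) v] g ssplit.prems(2) by simp
  have cons: "\<forall>q s. (\<sigma>(p \<mapsto> ?r)) q = Some s \<longrightarrow> \<nu> (pvar X q) = s" using ssplit.prems(1) by auto
  show ?case
  proof (cases ?r)
    case True
    have c1: "\<forall>q s. (\<sigma>(p \<mapsto> True)) q = Some s \<longrightarrow> \<nu> (pvar X q) = s" using cons True by simp
    have n1: "\<nu> (nxt ?u True i)" using nx True by simp
    have "t1" by (rule ssplit.IH(1)[OF c1 n1])
    then show ?thesis by simp
  next
    case False
    have c1: "\<forall>q s. (\<sigma>(p \<mapsto> False)) q = Some s \<longrightarrow> \<nu> (pvar X q) = s" using cons False by simp
    have n1: "\<nu> (nxt ?u False i)" using nx False by simp
    have "t2" by (rule ssplit.IH(2)[OF c1 n1])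
    then show ?thesis by simp
  qed
qed

lemma sat_equiv:
  assumes ex: "sexec X b 1 Map.empty t" and lb: "length b = n"
  shows "t \<longleftrightarrow> (\<exists>\<nu>. \<forall>C\<in>Cl X n b \<inter> Lk (2 * length X). \<exists>l\<in>C. lit_val \<nu> l)"
proof
  assume t
  then obtain \<tau> S where tS: "1 \<in> S" "S \<subseteq> {1..length X}" "\<forall>j\<in>S. ok_at X n b \<tau> S j"
    using dir_a[OF ex lb] by blast
  have L: "1 \<le> length X" using sexec_valid[OF ex] by simp
  have "\<forall>C\<in>Cl X n b. \<exists>l\<in>C. lit_val (asg X \<tau> S) l"
  proof
    fix C assume "C \<in> Cl X n b"
    then obtain cd where cd: "(C, cd) \<in> set (gens X n)" "holds b cd" unfolding Cl_def by blast
    then consider "C = {Pos 1}" | j where "j \<in> {1..length X}" "(C, cd) \<in> set (gat X n j)"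
      unfolding gens_def by (auto simp del: upt_Suc simp: less_Suc_eq_le)
    then show "\<exists>l\<in>C. lit_val (asg X \<tau> S) l"
    proof cases
      case 1 then show ?thesis using tS(1) L by (simp add: asg_def)
    next
      case 2
      show ?thesis
      proof (cases "j \<in> S")
        case True
        then show ?thesis using tS(3) 2(2) cd(2) unfolding ok_at_def by fastforce
      next
        case False
        have "Neg j \<in> C" using gat_props[OF 2(2)] by simp
        moreover have "\<not> asg X \<tau> S j" using False 2(1) by (simp add: asg_def)
        ultimately show ?thesis by force
      qed
    qed
  qed
  then show "\<exists>\<nu>. \<forall>C\<in>Cl X n b \<inter> Lk (2 * length X). \<exists>l\<in>C. lit_val \<nu> l" by blast
next
  assume "\<exists>\<nu>. \<forall>C\<in>Cl X n b \<inter> Lk (2 * length X). \<exists>l\<in>C. lit_val \<nu> l"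
  then obtain \<nu> where H: "\<forall>C\<in>Cl X n b \<inter> Lk (2 * length X). \<exists>l\<in>C. lit_val \<nu> l" by blast
  have L: "1 \<le> length X" using sexec_valid[OF ex] by simp
  have "{Pos 1} \<in> Cl X n b" unfolding Cl_def gens_def by force
  moreover have "{Pos 1} \<in> Lk (2 * length X)" using L by (auto intro!: Lk_intro Pos_lits)
  ultimately have "\<exists>l\<in>{Pos 1}. lit_val \<nu> l" using H by blast
  then have "\<nu> 1" by simp
  then show t using dir_b[OF ex lb H] by simp
qed



fun blkc :: "cnd \<Rightarrow> prim list" where
  "blkc Always = [Plain (Reg Out (Set True)), Plain (Reg Out (Set True))]"
| "blkc (IfT j) = [PosT (Reg (In j) Get), Plain (Reg Out (Set True))]"
| "blkc (IfF j) = [NegT (Reg (In j) Get), Plain (Reg Out (Set True))]"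

definition ORprog :: "cnd list \<Rightarrow> prim list" where
  "ORprog cs = concat (map blkc cs) @ [Term]"

lemma length_blkc[simp]: "length (blkc c) = 2"
  by (cases c) auto

lemma length_ORprog: "length (ORprog cs) = 2 * length cs + 1"
  by (induction cs) (auto simp: ORprog_def)

lemma out_step:
  assumes "1 \<le> i" "i \<le> length X" "X ! (i - 1) = Plain (Reg Out (Set True))"
    "nexec X n (i + 1) (s(Out := True)) s'"
  shows "nexec X n i s s'"
  using nexec.nbasic[of i X "Reg Out (Set True)" n s True "s(Out := True)" s'] assms by simp

lemma in_step:
  assumes "1 \<le> i" "i \<le> length X" "basic_of (X ! (i - 1)) = Some (Reg (In j) Get)" "1 \<le> j" "j \<le> n"
    "nexec X n (nxt (X ! (i - 1)) (s (In j)) i) s s'"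
  shows "nexec X n i s s'"
  using nexec.nbasic[of i X "Reg (In j) Get" n s "s (In j)" s s'] assms by simp

lemma or_sem:
  assumes "X = pre @ concat (map blkc cs) @ [Term]" "\<forall>c\<in>set cs. cok n c"
    "\<forall>j. 1 \<le> j \<and> j \<le> n \<longrightarrow> s (In j) = b ! (j - 1)"
  shows "\<exists>s'. nexec X n (length pre + 1) s s' \<and> (s' Out = (s Out \<or> (\<exists>c\<in>set cs. holds b c)))"
  using assms
proof (induction cs arbitrary: pre s)
  case Nil
  have "nexec X n (length pre + 1) s s" using Nil.prems(1) by (intro nexec.nterm) (auto simp: nth_append)
  then show ?case by auto
next
  case (Cons c cs)
  let ?i = "length pre + 1"
  have X: "X = (pre @ blkc c) @ concat (map blkc cs) @ [Term]" using Cons.prems(1) by simp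
  have e: "length (pre @ blkc c) + 1 = ?i + 2" by simp
  have IH: "\<exists>s'. nexec X n (?i + 2) s0 s' \<and> (s' Out = (s0 Out \<or> (\<exists>c\<in>set cs. holds b c)))"
    if "\<forall>j. 1 \<le> j \<and> j \<le> n \<longrightarrow> s0 (In j) = b ! (j - 1)" for s0
    using Cons.IH[OF X _ that] Cons.prems(2) e by simp
  have lenX: "?i + 1 \<le> length X" using X by simp
  have in1: "\<forall>j. 1 \<le> j \<and> j \<le> n \<longrightarrow> (s(Out := True)) (In j) = b ! (j - 1)" using Cons.prems(3) by simp
  obtain s1 where s1': "nexec X n (?i + 2) (s(Out := True)) s1"
      "s1 Out = ((s(Out := True)) Out \<or> (\<exists>c\<in>set cs. holds b c))"
    using IH[OF in1] by blast
  have s1: "nexec X n (?i + 2) (s(Out := True)) s1" "s1 Out = True" using s1' by auto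
  obtain s2 where s2: "nexec X n (?i + 2) s s2" "s2 Out = (s Out \<or> (\<exists>c\<in>set cs. holds b c))"
    using IH[OF Cons.prems(3)] by auto
  show ?case
  proof (cases c)
    case Always
    have at: "X ! (?i - 1) = Plain (Reg Out (Set True))" "X ! (?i + 1 - 1) = Plain (Reg Out (Set True))"
      using X Always by (auto simp: nth_append)
    have "nexec X n (?i + 1) (s(Out := True)) s1"
      using out_step[of "?i + 1" X n "s(Out := True)" s1] at lenX s1(1) by (simp add: add.assoc)
    then have "nexec X n ?i s s1" using out_step[of ?i X n s s1] at lenX by simp
    then show ?thesis using s1(2) Always by auto
  next
    case (IfT j)
    have j: "1 \<le> j" "j \<le> n" using Cons.prems(2) IfT by auto
    have at: "X ! (?i - 1) = PosT (Reg (In j) Get)" "X ! (?i + 1 - 1) = Plain (Reg Out (Set True))"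
      using X IfT by (auto simp: nth_append)
    have sj: "s (In j) = b ! (j - 1)" using Cons.prems(3) j by auto
    show ?thesis
    proof (cases "b ! (j - 1)")
      case True
      have "nexec X n (?i + 1) s s1"
        using out_step[of "?i + 1" X n s s1] at lenX s1(1) by (simp add: add.assoc)
      then have "nexec X n ?i s s1" using in_step[of ?i X j n s s1] at lenX j sj True by simp
      then show ?thesis using s1(2) IfT True by auto
    next
      case False
      have "nexec X n ?i s s2" using in_step[of ?i X j n s s2] at lenX j sj False s2(1)
        by (simp add: add.assoc)
      then show ?thesis using s2(2) IfT False by auto
    qed
  next
    case (IfF j)
    have j: "1 \<le> j" "j \<le> n" using Cons.prems(2) IfF by auto
    have at: "X ! (?i - 1) = NegT (Reg (In j) Get)" "X ! (?i + 1 - 1) = Plain (Reg Out (Set True))"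
      using X IfF by (auto simp: nth_append)
    have sj: "s (In j) = b ! (j - 1)" using Cons.prems(3) j by auto
    show ?thesis
    proof (cases "b ! (j - 1)")
      case False
      have "nexec X n (?i + 1) s s1"
        using out_step[of "?i + 1" X n s s1] at lenX s1(1) by (simp add: add.assoc)
      then have "nexec X n ?i s s1" using in_step[of ?i X j n s s1] at lenX j sj False by simp
      then show ?thesis using s1(2) IfF False by auto
    next
      case True
      have "nexec X n ?i s s2" using in_step[of ?i X j n s s2] at lenX j sj True s2(1)
        by (simp add: add.assoc)
      then show ?thesis using s2(2) IfF True by auto
    qed
  qed
qed

lemma basics_blkc:
  "\<forall>c\<in>set cs. cok n c \<Longrightarrow> basics (concat (map blkc cs)) \<subseteq>
     {Reg (In i) Get | i. i \<ge> 1} \<union> {Reg Out (Set b) | b. True}"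
proof (induction cs)
  case Nil then show ?case by (simp add: basics_def)
next
  case (Cons c cs)
  then show ?case by (cases c) (auto simp: basics_append basics_Cons)
qed

lemma or_computes:
  assumes "\<forall>c\<in>set cs. cok n c"
  shows "computes (ORprog cs) n (\<lambda>b. \<exists>c\<in>set cs. holds b c)"
proof -
  have "ORprog cs \<in> IS_br"
    using basics_blkc[OF assms] unfolding IS_br_def ORprog_def
    by (auto simp: basics_append basics_Cons basics_def)
  moreover have "\<exists>s'. nexec (ORprog cs) n 1 (init_regs b) s' \<and> s' Out = (\<exists>c\<in>set cs. holds b c)"
    if "length b = n" for b
  proof -
    have ir: "\<forall>j. 1 \<le> j \<and> j \<le> n \<longrightarrow> init_regs b (In j) = b ! (j - 1)" using that by (simp add: init_regs_def)
    have o: "init_regs b Out = False" by (simp add: init_regs_def)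
    from or_sem[of "ORprog cs" "[]" cs, OF _ assms ir] show ?thesis
      by (simp add: ORprog_def o)
  qed
  ultimately show ?thesis unfolding computes_def by blast
qed

lemma gens_cok: "x \<in> set (gens X n) \<Longrightarrow> cok n (snd x)"
proof -
  assume "x \<in> set (gens X n)"
  then have "x = ({Pos 1}, Always) \<or> (\<exists>i. x \<in> set (gat X n i))" unfolding gens_def by (auto simp del: upt_Suc)
  then show ?thesis
  proof (elim disjE exE)
    fix i assume "x \<in> set (gat X n i)"
    then show ?thesis using gat_props[of x X n i] by simp
  qed simp
qed

lemma img_all: "f ` A = B \<Longrightarrow> (\<forall>i\<in>A. f i \<in> S \<longrightarrow> P (f i)) \<longleftrightarrow> (\<forall>C\<in>S \<inter> B. P C)"
  by auto

lemma le_cube: "(x::nat) \<le> x ^ 3"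
  by (cases "x = 0") (auto intro: self_le_power)

lemma hardness:
  assumes adm: "admissible_alpha alpha" and G: "G \<in> P_lsis"
  shows "red_pl G (sat3C alpha)"
proof -
  obtain h where hX: "\<forall>n. \<exists>X. split_computes X n (G n) \<and> length X \<le> poly h n"
    using G unfolding P_lsis_def by blast
  define q where "q = (smult 4 h + [:3:]) ^ 3"
  have qn: "poly q n = (4 * poly h n + 3) ^ 3" for n by (simp add: q_def)
  have "\<exists>l m. l \<le> poly q n \<and> m \<le> poly q n \<and> red_l l n (G n) m (sat3C alpha m)" for n
  proof -
    obtain X where sc: "split_computes X n (G n)" and len: "length X \<le> poly h n" using hX by blast
    define L where "L = length X"
    define k where "k = 2 * L"
    define m where "m = d k"
    define h' where "h' = (\<lambda>c b. alpha k (Suc c) \<in> Cl X n b)"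
    have bnd1: "4 * L + 3 \<le> poly q n"
    proof -
      have "4 * L + 3 \<le> 4 * poly h n + 3" using len L_def by simp
      also have "\<dots> \<le> (4 * poly h n + 3) ^ 3" by (rule le_cube)
      finally show ?thesis using qn by simp
    qed
    have bnd2: "m \<le> poly q n"
    proof -
      have "m \<le> (2 * k + 1) ^ 3" unfolding m_def by (rule d_le)
      also have "\<dots> \<le> (4 * poly h n + 3) ^ 3" using len unfolding k_def L_def
        by (intro power_mono) auto
      finally show ?thesis using qn by simp
    qed
    have comp: "\<exists>Y. computes Y n (h' c) \<and> length Y \<le> 4 * L + 3" for c
    proof -
      let ?cs = "map snd (filter (\<lambda>x. fst x = alpha k (Suc c)) (gens X n))"
      have cok: "\<forall>c\<in>set ?cs. cok n c" using gens_cok by auto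
      have eq: "h' c = (\<lambda>b. \<exists>cd\<in>set ?cs. holds b cd)"
        unfolding h'_def Cl_def by (rule ext) force
      have "length (ORprog ?cs) \<le> 4 * L + 3"
      proof -
        have "length ?cs \<le> length (gens X n)" by simp
        then have "length ?cs \<le> 2 * L + 1" using length_gens[of X n] L_def by linarith
        then show ?thesis unfolding length_ORprog[of ?cs] by linarith
      qed
      then show ?thesis using or_computes[OF cok] eq by auto
    qed
    have red: "G n b = sat3C alpha m (map (\<lambda>c. h' c b) [0..<m])" if lb: "length b = n" for b
    proof -
      obtain t where t: "sexec X b 1 Map.empty t" "G n b \<longleftrightarrow> t"
        using sc lb unfolding split_computes_def by blast
      have 1: "G n b \<longleftrightarrow> (\<exists>\<nu>. \<forall>C\<in>Cl X n b \<inter> Lk k. \<exists>l\<in>C. lit_val \<nu> l)"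
        using sat_equiv[OF t(1) lb] t(2) unfolding k_def L_def by simp
      have surj: "alpha k ` {1..d k} = Lk k" using adm bij_betw_imp_surj_on
        unfolding admissible_alpha_def by blast
      have bits: "(map (\<lambda>c. h' c b) [0..<m]) ! (i - 1) = (alpha k i \<in> Cl X n b)" if "i \<in> {1..d k}" for i
        using that unfolding m_def h'_def by auto
      have A: "(\<forall>i\<in>{1..d k}. (map (\<lambda>c. h' c b) [0..<m]) ! (i - 1) \<longrightarrow> (\<exists>l\<in>alpha k i. lit_val \<sigma> l))
          \<longleftrightarrow> (\<forall>i\<in>{1..d k}. alpha k i \<in> Cl X n b \<longrightarrow> (\<exists>l\<in>alpha k i. lit_val \<sigma> l))" for \<sigma>
        using bits by auto
      have B: "(\<forall>i\<in>{1..d k}. alpha k i \<in> Cl X n b \<longrightarrow> (\<exists>l\<in>alpha k i. lit_val \<sigma> l))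
          \<longleftrightarrow> (\<forall>C\<in>Cl X n b \<inter> Lk k. \<exists>l\<in>C. lit_val \<sigma> l)" for \<sigma>
        using img_all[OF surj, of "Cl X n b" "\<lambda>C. \<exists>l\<in>C. lit_val \<sigma> l"] by simp
      have "sat3C alpha m (map (\<lambda>c. h' c b) [0..<m]) \<longleftrightarrow>
          (\<exists>\<sigma>. \<forall>i\<in>{1..d k}. (map (\<lambda>c. h' c b) [0..<m]) ! (i - 1) \<longrightarrow> (\<exists>l\<in>alpha k i. lit_val \<sigma> l))"
        unfolding sat3C_def Let_def m_def kof_d by (rule refl)
      also have "\<dots> \<longleftrightarrow> (\<exists>\<sigma>. \<forall>C\<in>Cl X n b \<inter> Lk k. \<exists>l\<in>C. lit_val \<sigma> l)"
        using A B by simp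
      finally show ?thesis using 1 by simp
    qed
    have "red_l (4 * L + 3) n (G n) m (sat3C alpha m)"
      unfolding red_l_def using comp red by blast
    then show ?thesis using bnd1 bnd2 by blast
  qed
  then show ?thesis unfolding red_pl_def by blast
qed

theorem theorem11:
  fixes alpha :: "nat \<Rightarrow> nat \<Rightarrow> lit set"
  assumes "admissible_alpha alpha"
  shows "P_lsis_complete (sat3C alpha)"
  unfolding P_lsis_complete_def using membership[OF assms] hardness[OF assms] by blast


end
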